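(* For all finite sets of formulas $\Gamma,\Delta$: if $\Gamma\Vdash^{cf}\Delta$, then the sequent $\Gamma\Rightarrow\Delta$ is provable in $\mathsf{CLp}$.
   Context: Fix a countably infinite set $\mathsf{At}$ of atoms. Formulas are built from atoms and the constant $\bot$ using the binary connectives $\land,\lor,\to$. All contexts are finite sets (not multisets) of formulas; a comma denotes union; a subscript $\mathsf{At}$ indicates a finite set of atoms. An atomic sequent has the form $\Gamma_{\mathsf{At}} \Rightarrow \Delta_{\mathsf{At}}$. An atomic rule has finitely many (possibly zero) atomic sequents as premises and one atomic sequent as conclusion; a rule with zero premises is an atomic axiom. A base is a (possibly empty) set of atomic rules; $\mathcal{C}\supseteq\mathcal{B}$ ($\mathcal{C}$ extends $\mathcal{B}$) if $\mathcal{C}$ contains every rule of $\mathcal{B}$. Derivability $\vdash_{\mathcal{B}}$ of atomic sequents is the least relation such that: (Axiom/Weakening) if an atomic axiom with conclusion $\Gamma_{\mathsf{At}}\Rightarrow\Delta_{\mathsf{At}}$ is in $\mathcal{B}$, then $\vdash_{\mathcal{B}} \Theta_{\mathsf{At}},\Gamma_{\mathsf{At}}\Rightarrow\Delta_{\mathsf{At}},\Sigma_{\mathsf{At}}$ for all sets of atoms $\Theta_{\mathsf{At}},\Sigma_{\mathsf{At}}$; (Mix) if a rule with premises $\Gamma^i_{\mathsf{At}}\Rightarrow\Delta^i_{\mathsf{At}}$ ($1\le i\le n$) and conclusion $\Gamma_{\mathsf{At}}\Rightarrow\Delta_{\mathsf{At}}$ is in $\mathcal{B}$ and $\vdash_{\mathcal{B}}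 \Theta^i_{\mathsf{At}},\Gamma^i_{\mathsf{At}}\Rightarrow\Delta^i_{\mathsf{At}},\Sigma^i_{\mathsf{At}}$ for each $i$, then $\vdash_{\mathcal{B}} \Theta^1_{\mathsf{At}},\dots,\Theta^n_{\mathsf{At}},\Gamma_{\mathsf{At}}\Rightarrow\Delta_{\mathsf{At}},\Sigma^1_{\mathsf{At}},\dots,\Sigma^n_{\mathsf{At}}$. Support $\Vdash_{\mathcal{B}}$: (At) $\Vdash_{\mathcal{B}}\Gamma_{\mathsf{At}}$ iff $\vdash_{\mathcal{B}}\ \Rightarrow\Gamma_{\mathsf{At}}$; ($\land$) $\Vdash_{\mathcal{B}} A\land B,\Gamma$ iff $\Vdash_{\mathcal{B}}A,\Gamma$ and $\Vdash_{\mathcal{B}}B,\Gamma$; ($\lor$) $\Vdash_{\mathcal{B}}A\lor B,\Gamma$ iff $\Vdash_{\mathcal{B}}A,B,\Gamma$; ($\to$) $\Vdash_{\mathcal{B}}A\to B,\Gamma$ iff $A\Vdash_{\mathcal{B}}B,\Gamma$; ($\bot$) $\Vdash_{\mathcal{B}}\bot,\Gamma$ iff $\Vdash_{\mathcal{B}}\Gamma$; (Inf) for $n\ge1$, $\{A^1,\dots,A^n\}\Vdash_{\mathcal{B}}\Delta$ iff for every $\mathcal{C}\supseteq\mathcal{B}$ and all sets of atoms $\Theta^1_{\mathsf{At}},\dots,\Theta^n_{\mathsf{At}}$, if $\Vdash_{\mathcal{C}}\Theta^i_{\mathsf{At}},A^i$ for all $i$ then $\Vdash_{\mathcal{C}}\Theta^1_{\mathsf{At}},\dots,\Theta^n_{\mathsf{At}},\Delta$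 (and $\varnothing\Vdash_{\mathcal{B}}\Delta$ means $\Vdash_{\mathcal{B}}\Delta$). The atomic identity rule $\mathsf{Ainit}$ is the atomic axiom $\Gamma_{\mathsf{At}},p\Rightarrow p,\Delta_{\mathsf{At}}$. $\mathcal{HS}$ is the base consisting of all instances of $\mathsf{Ainit}$. Cut-free validity: $\Gamma\Vdash^{cf}\Delta$ iff $\Gamma\Vdash_{\mathcal{B}}\Delta$ for every base $\mathcal{B}\supseteq\mathcal{HS}$. $\mathsf{CLp}$ is the sequent calculus on sequents $\Gamma\Rightarrow\Delta$ (finite sets of formulas) with rules: $\mathsf{init}$: $\Gamma,A\Rightarrow A,\Delta$; $L\bot$: $\Gamma,\bot\Rightarrow\Delta$; $R\bot$: from $\Gamma\Rightarrow\Delta$ infer $\Gamma\Rightarrow\bot,\Delta$; $L\land$: from $A,B,\Gamma\Rightarrow\Delta$ infer $A\land B,\Gamma\Rightarrow\Delta$; $R\land$: from $\Gamma\Rightarrow\Delta,A$ and $\Gamma'\Rightarrow\Delta',B$ infer $\Gamma,\Gamma'\Rightarrow\Delta,\Delta',A\land B$; $L\lor$: from $A,\Gamma\Rightarrow\Delta$ and $B,\Gamma'\Rightarrow\Delta'$ infer $A\lor B,\Gamma,\Gamma'\Rightarrow\Delta,\Delta'$; $R\lor$: from $\Gamma\Rightarrow\Delta,A,B$ infer $\Gamma\Rightarrow\Delta,A\lor B$; $L\to$: from $\Gamma\Rightarrow\Delta,A$ and $B,\Gamma'\Rightarrow\Delta'$ infer $A\to B,\Gamma,\Gamma'\Rightarrow\Delta,\Delta'$;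 $R\to$: from $A,\Gamma\Rightarrow\Delta,B$ infer $\Gamma\Rightarrow\Delta,A\to B$. *)

theory Defs
  imports Main
begin

datatype form = Atom nat | Bot | Conj form form | Disj form form | Imp form form

type_synonym aseq = "nat set \<times> nat set"
type_synonym arule = "aseq list \<times> aseq"

definition fin_aseq :: "aseq \<Rightarrow> bool" where
  "fin_aseq s \<longleftrightarrow> finite (fst s) \<and> finite (snd s)"

definition atomic_rule :: "arule \<Rightarrow> bool" where
  "atomic_rule r \<longleftrightarrow> (\<forall>s\<in>set (fst r). fin_aseq s) \<and> fin_aseq (snd r)"

definition base :: "arule set \<Rightarrow> bool" where
  "base B \<longleftrightarrow> (\<forall>r\<in>B. atomic_rule r)"

inductive derivable :: "arule set \<Rightarrow> aseq \<Rightarrow> bool" for B where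
  axiom_weak: "([], (G, D)) \<in> B \<Longrightarrow> finite Th \<Longrightarrow> finite Sg \<Longrightarrow>
     derivable B (Th \<union> G, D \<union> Sg)"
| mix: "(ps, (G, D)) \<in> B \<Longrightarrow> length Ths = length ps \<Longrightarrow> length Sgs = length ps \<Longrightarrow>
     (\<forall>i<length ps. finite (Ths ! i) \<and> finite (Sgs ! i) \<and>
        derivable B (Ths ! i \<union> fst (ps ! i), snd (ps ! i) \<union> Sgs ! i)) \<Longrightarrow>
     derivable B (\<Union> (set Ths) \<union> G, D \<union> \<Union> (set Sgs))"

fun wt :: "form \<Rightarrow> nat" where
  "wt (Atom p) = 0"
| "wt Bot = 1"
| "wt (Conj A B) = Suc (wt A + wt B)"
| "wt (Disj A B) = Suc (wt A + wt B)"
| "wt (Imp A B) = Suc (wt A + wt B)"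

definition cwt :: "form set \<Rightarrow> nat" where
  "cwt G = (\<Sum>A\<in>G. wt A)"

fun is_atom :: "form \<Rightarrow> bool" where
  "is_atom (Atom p) = True"
| "is_atom _ = False"

definition pick :: "form set \<Rightarrow> form" where
  "pick G = (SOME A. A \<in> G \<and> \<not> is_atom A)"

lemma pick_in:
  assumes "\<exists>A\<in>G. \<not> is_atom A"
  shows "pick G \<in> G \<and> \<not> is_atom (pick G)"
proof -
  from assms have "\<exists>A. A \<in> G \<and> \<not> is_atom A" by blast
  then have "(SOME A. A \<in> G \<and> \<not> is_atom A) \<in> G \<and> \<not> is_atom (SOME A. A \<in> G \<and> \<not> is_atom A)"
    by (rule someI_ex)
  then show ?thesis unfolding pick_def .
qed

lemma wt_pos: "\<not> is_atom A \<Longrightarrow> 0 < wt A"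
  by (cases A) auto

lemma cwt_remove:
  assumes "finite G" "A \<in> G"
  shows "cwt G = wt A + cwt (G - {A})"
  unfolding cwt_def using assms by (simp add: sum.remove)

lemma cwt_insert_le:
  assumes "finite G"
  shows "cwt (insert A G) \<le> wt A + cwt G"
  using assms unfolding cwt_def by (cases "A \<in> G") (simp_all add: insert_absorb)

lemma cwt_atoms:
  assumes "finite Th" "finite S"
  shows "cwt (Atom ` Th \<union> S) = cwt S"
proof -
  have "cwt (Atom ` Th \<union> S) = cwt (Atom ` Th - S) + cwt S"
  proof -
    have eq: "Atom ` Th \<union> S = (Atom ` Th - S) \<union> S" by blast
    have "finite (Atom ` Th - S)" using assms by simp
    moreover have "(Atom ` Th - S) \<inter> S = {}" by blast
    ultimately show ?thesis unfolding cwt_def eq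
      using assms(2) sum.union_disjoint[of "Atom ` Th - S" S wt] by simp
  qed
  moreover have "cwt (Atom ` Th - S) = 0" unfolding cwt_def by (auto intro!: sum.neutral)
  ultimately show ?thesis by simp
qed

text \<open>The support relation for a base B and a (finite) set of formulas G
  (read as a context on the right):
  (At) if G consists of atoms only, it is supported iff the atomic sequent
       with empty antecedent and succedent G is derivable in B;
  otherwise a non-atomic formula of G is decomposed according to the clauses
  (bot), (and), (or), (imp), where in (imp) the judgement  X |= Y, R  is unfolded
  by clause (Inf) with n = 1.  Contexts are sets; the formula being decomposed is
  removed from the rest of the context R.
  The recursion is well-founded on cwt (the non-atomic weight of the context);
  technically we define it with a fuel argument n and then supply fuel
  Suc (cwt G), which always suffices (every recursive call lowers cwt), cf.
  lemma supp_unfold below.\<close>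

primrec supp_fuel :: "nat \<Rightarrow> arule set \<Rightarrow> form set \<Rightarrow> bool" where
  "supp_fuel 0 B G = False"
| "supp_fuel (Suc n) B G =
    (if \<not> finite G then False
     else if \<forall>A\<in>G. is_atom A then derivable B ({}, {p. Atom p \<in> G})
     else (let A = pick G; R = G - {A} in
       (case A of
          Bot \<Rightarrow> supp_fuel n B R
        | Conj X Y \<Rightarrow> supp_fuel n B (insert X R) \<and> supp_fuel n B (insert Y R)
        | Disj X Y \<Rightarrow> supp_fuel n B (insert X (insert Y R))
        | Imp X Y \<Rightarrow>
            (\<forall>C Th. base C \<longrightarrow> B \<subseteq> C \<longrightarrow> finite Th \<longrightarrow>
               supp_fuel n C (Atom ` Th \<union> {X}) \<longrightarrow> supp_fuel n C (Atom ` Th \<union> insert Y R))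
        | Atom p \<Rightarrow> False)))"

definition supp :: "arule set \<Rightarrow> form set \<Rightarrow> bool" where
  "supp B G = supp_fuel (Suc (cwt G)) B G"

text \<open>G |=_B D.  For nonempty G = {A1,...,An}, the atom sets Theta^i are indexed
  by the formulas of G themselves (the A^i are distinct elements of a set).\<close>

definition infer :: "arule set \<Rightarrow> form set \<Rightarrow> form set \<Rightarrow> bool" where
  "infer B G D =
    (if G = {} then supp B D
     else (\<forall>C Th. base C \<longrightarrow> B \<subseteq> C \<longrightarrow>
             (\<forall>A\<in>G. finite (Th A) \<and> supp C (Atom ` Th A \<union> {A})) \<longrightarrow>
             supp C (Atom ` (\<Union>A\<in>G. Th A) \<union> D)))"

definition HS :: "arule set" where
  "HS = {([], (insert p G, insert p D)) | p G D. finite G \<and> finite D}"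

definition cf_valid :: "form set \<Rightarrow> form set \<Rightarrow> bool" where
  "cf_valid G D \<longleftrightarrow> (\<forall>B. base B \<longrightarrow> HS \<subseteq> B \<longrightarrow> infer B G D)"

text \<open>Each rule is written with
  the conclusion's contexts as variables Gc, Dc, together with equations fixing
  them (this is literally the rule as given, e.g. Gc = G,A and Dc = A,D for init).\<close>

inductive CLp :: "form set \<Rightarrow> form set \<Rightarrow> bool" where
  init: "finite G \<Longrightarrow> finite D \<Longrightarrow> Gc = insert A G \<Longrightarrow> Dc = insert A D \<Longrightarrow> CLp Gc Dc"
| LBot: "finite G \<Longrightarrow> finite D \<Longrightarrow> Gc = insert Bot G \<Longrightarrow> CLp Gc D"
| RBot: "CLp G D \<Longrightarrow> Dc = insert Bot D \<Longrightarrow> CLp G Dc"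
| LConj: "CLp (insert A (insert B G)) D \<Longrightarrow> Gc = insert (Conj A B) G \<Longrightarrow> CLp Gc D"
| RConj: "CLp G (insert A D) \<Longrightarrow> CLp G' (insert B D') \<Longrightarrow>
    Gc = G \<union> G' \<Longrightarrow> Dc = insert (Conj A B) (D \<union> D') \<Longrightarrow> CLp Gc Dc"
| LDisj: "CLp (insert A G) D \<Longrightarrow> CLp (insert B G') D' \<Longrightarrow>
    Gc = insert (Disj A B) (G \<union> G') \<Longrightarrow> Dc = D \<union> D' \<Longrightarrow> CLp Gc Dc"
| RDisj: "CLp G (insert A (insert B D)) \<Longrightarrow> Dc = insert (Disj A B) D \<Longrightarrow> CLp G Dc"
| LImp: "CLp G (insert A D) \<Longrightarrow> CLp (insert B G') D' \<Longrightarrow>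
    Gc = insert (Imp A B) (G \<union> G') \<Longrightarrow> Dc = D \<union> D' \<Longrightarrow> CLp Gc Dc"
| RImp: "CLp (insert A G) (insert B D) \<Longrightarrow> Dc = insert (Imp A B) D \<Longrightarrow> CLp G Dc"

end

theory Submission
  imports Defs
begin


fun ev :: "(nat \<Rightarrow> bool) \<Rightarrow> form \<Rightarrow> bool" where
  "ev v (Atom p) = v p"
| "ev v Bot = False"
| "ev v (Conj A B) = (ev v A \<and> ev v B)"
| "ev v (Disj A B) = (ev v A \<or> ev v B)"
| "ev v (Imp A B) = (ev v A \<longrightarrow> ev v B)"


lemma is_atomE: "is_atom A \<Longrightarrow> \<exists>p. A = Atom p"
  by (cases A) auto

lemma classical_complete:
  "finite G \<Longrightarrow> finite D \<Longrightarrow> (\<forall>v. (\<forall>A\<in>G. ev v A) \<longrightarrow> (\<exists>B\<in>D. ev v B)) \<Longrightarrow> CLp G D"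
proof (induction "cwt G + cwt D" arbitrary: G D rule: less_induct)
  case less
  note fin = less.prems(1,2) and val = less.prems(3)
  show ?case
  proof (cases "\<exists>A\<in>G. \<not> is_atom A")
    case True
    then obtain A where A: "A \<in> G" "\<not> is_atom A" by blast
    define R where "R = G - {A}"
    have GR: "G = insert A R" using A R_def by blast
    have finR: "finite R" using fin R_def by simp
    have cw: "cwt G = wt A + cwt R" using cwt_remove[OF fin(1) A(1)] R_def by simp
    show ?thesis
    proof (cases A)
      case (Atom p) then show ?thesis using A by simp
    next
      case Bot then show ?thesis using GR fin finR by (auto intro: CLp.LBot)
    next
      case (Conj X Y)
      have c: "cwt (insert X (insert Y R)) < cwt G"
        using cw Conj cwt_insert_le[of R Y] cwt_insert_le[of "insert Y R" X] finR by simp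
      have "CLp (insert X (insert Y R)) D"
        using less.hyps[OF _ _ fin(2)] c finR val GR Conj by auto
      then show ?thesis using GR Conj by (auto intro: CLp.LConj)
    next
      case (Disj X Y)
      have c1: "cwt (insert X R) < cwt G" and c2: "cwt (insert Y R) < cwt G"
        using cw Disj cwt_insert_le[of R Y] cwt_insert_le[of R X] finR by simp_all
      have "CLp (insert X R) D" using less.hyps[OF _ _ fin(2)] c1 finR val GR Disj by auto
      moreover have "CLp (insert Y R) D" using less.hyps[OF _ _ fin(2)] c2 finR val GR Disj by auto
      ultimately show ?thesis using GR Disj CLp.LDisj[of X R D Y R D G D] by auto
    next
      case (Imp X Y)
      have c1: "cwt R + cwt (insert X D) < cwt G + cwt D" and c2: "cwt (insert Y R) < cwt G"
        using cw Imp cwt_insert_le[of R Y] cwt_insert_le[of D X] finR fin by simp_all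
      have v1: "\<forall>v. (\<forall>A\<in>R. ev v A) \<longrightarrow> (\<exists>B\<in>insert X D. ev v B)"
        using val GR Imp by fastforce
      have "CLp R (insert X D)" using less.hyps[OF _ finR _ v1] c1 fin GR by auto
      moreover have "CLp (insert Y R) D" using less.hyps[OF _ _ fin(2)] c2 finR val GR Imp by auto
      ultimately show ?thesis using GR Imp CLp.LImp[of R X D Y R D G D] by auto
    qed
  next
    case GA: False
    show ?thesis
    proof (cases "\<exists>A\<in>D. \<not> is_atom A")
      case True
      then obtain A where A: "A \<in> D" "\<not> is_atom A" by blast
      define R where "R = D - {A}"
      have DR: "D = insert A R" using A R_def by blast
      have finR: "finite R" using fin R_def by simp
      have cw: "cwt D = wt A + cwt R" using cwt_remove[OF fin(2) A(1)] R_def by simp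
      show ?thesis
      proof (cases A)
        case (Atom p) then show ?thesis using A by simp
      next
        case Bot
        have "CLp G R" using less.hyps[OF _ fin(1) finR] cw Bot val DR by auto
        then show ?thesis using DR Bot by (auto intro: CLp.RBot)
      next
        case (Conj X Y)
        have c1: "cwt (insert X R) < cwt D" and c2: "cwt (insert Y R) < cwt D"
          using cw Conj cwt_insert_le[of R Y] cwt_insert_le[of R X] finR by simp_all
        have v1: "\<forall>v. (\<forall>A\<in>G. ev v A) \<longrightarrow> (\<exists>B\<in>insert X R. ev v B)"
          using val DR Conj by fastforce
        have v2: "\<forall>v. (\<forall>A\<in>G. ev v A) \<longrightarrow> (\<exists>B\<in>insert Y R. ev v B)"
          using val DR Conj by fastforce
        have "CLp G (insert X R)" using less.hyps[OF _ fin(1) _ v1] c1 finR by auto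
        moreover have "CLp G (insert Y R)" using less.hyps[OF _ fin(1) _ v2] c2 finR by auto
        ultimately show ?thesis using DR Conj CLp.RConj[of G X R G Y R G D] by auto
      next
        case (Disj X Y)
        have c: "cwt (insert X (insert Y R)) < cwt D"
          using cw Disj cwt_insert_le[of R Y] cwt_insert_le[of "insert Y R" X] finR by simp
        have "CLp G (insert X (insert Y R))"
          using less.hyps[OF _ fin(1)] c finR val DR Disj by auto
        then show ?thesis using DR Disj by (auto intro: CLp.RDisj)
      next
        case (Imp X Y)
        have c1: "cwt (insert X G) + cwt (insert Y R) < cwt G + cwt D"
          using cw Imp cwt_insert_le[of R Y] cwt_insert_le[of G X] finR fin by simp
        have "CLp (insert X G) (insert Y R)" using less.hyps c1 fin finR val DR Imp by auto
        then show ?thesis using DR Imp by (auto intro: CLp.RImp)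
      qed
    next
      case DA: False
      show ?thesis
      proof (cases "\<exists>A\<in>G. A \<in> D")
        case True
        then obtain A where "A \<in> G" "A \<in> D" by blast
        then show ?thesis using fin CLp.init[of "G - {A}" "D - {A}" G A D] by auto
      next
        case False
        define v where "v p = (Atom p \<in> G)" for p
        have "\<forall>A\<in>G. ev v A" using GA v_def by (auto dest!: is_atomE)
        then obtain B where "B \<in> D" "ev v B" using val by blast
        then show ?thesis using DA False v_def by (auto dest!: is_atomE)
      qed
    qed
  qed
qed



definition Cv :: "(nat \<Rightarrow> bool) \<Rightarrow> arule set" where
  "Cv v = HS \<union> {([], ({}, {p})) | p. v p} \<union> {([], ({p}, {})) | p. \<not> v p}
     \<union> {([({}, {q}), ({q}, {})], ({}, {})) | q. True}"

definition inc :: "arule set \<Rightarrow> bool" where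
  "inc C \<longleftrightarrow> (\<forall>S. finite S \<longrightarrow> derivable C ({}, S))"

lemma base_Cv: "base (Cv v)"
  unfolding base_def Cv_def HS_def atomic_rule_def fin_aseq_def by auto

lemma HS_Cv: "HS \<subseteq> Cv v"
  unfolding Cv_def by auto

lemma der_mono:
  assumes "derivable B s" "B \<subseteq> C" shows "derivable C s"
  using assms(1)
proof induct
  case (axiom_weak G D Th Sg)
  then show ?case using assms(2) by (auto intro: derivable.axiom_weak)
next
  case (mix ps G D Ths Sgs)
  then show ?case using assms(2) by (auto intro!: derivable.mix)
qed

lemma inc_mono: "inc B \<Longrightarrow> B \<subseteq> C \<Longrightarrow> inc C"
  unfolding inc_def using der_mono by blast

lemma cut_lemma:
  assumes "finite S" "\<forall>p\<in>S. \<not> v p" "Cv v \<subseteq> C" "finite S'"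
  shows "derivable C ({}, S \<union> S') \<Longrightarrow> derivable C ({}, S')"
  using assms(1,2)
proof (induction S rule: finite_induct)
  case empty then show ?case by simp
next
  case (insert q S0)
  define ps :: "aseq list" where "ps = [({}, {q}), ({q}, {})]"
  define Ths :: "nat set list" where "Ths = [{}, {}]"
  define Sgs :: "nat set list" where "Sgs = [S0 \<union> S', {}]"
  have r: "(ps, ({}, {})) \<in> C" using assms(3) unfolding ps_def Cv_def by auto
  have ax: "([], ({q}, {})) \<in> C" using assms(3) insert.prems unfolding Cv_def by auto
  have d1: "derivable C ({q}, {})" using derivable.axiom_weak[OF ax, of "{}" "{}"] by simp
  have d0: "derivable C ({}, {q} \<union> (S0 \<union> S'))" using insert.prems(1) by (simp add: Un_assoc)
  have all: "\<forall>i<length ps. finite (Ths ! i) \<and> finite (Sgs ! i) \<and>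
        derivable C (Ths ! i \<union> fst (ps ! i), snd (ps ! i) \<union> Sgs ! i)"
  proof (intro allI impI)
    fix i assume "i < length ps"
    then have "i = 0 \<or> i = 1" unfolding ps_def by auto
    then show "finite (Ths ! i) \<and> finite (Sgs ! i) \<and>
        derivable C (Ths ! i \<union> fst (ps ! i), snd (ps ! i) \<union> Sgs ! i)"
      using d0 d1 insert.hyps(1) assms(4) unfolding ps_def Ths_def Sgs_def by auto
  qed
  have "derivable C (\<Union> (set Ths) \<union> {}, {} \<union> \<Union> (set Sgs))"
    by (rule derivable.mix[OF r _ _ all]) (simp_all add: ps_def Ths_def Sgs_def)
  then have "derivable C ({}, S0 \<union> S')" by (simp add: Ths_def Sgs_def)
  then show ?case using insert.IH insert.prems by simp
qed

definition Inv :: "(nat \<Rightarrow> bool) \<Rightarrow> aseq \<Rightarrow> bool" where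
  "Inv v s \<longleftrightarrow> fst s \<inter> snd s \<noteq> {} \<or> (\<exists>p\<in>snd s. v p) \<or> (\<exists>p\<in>fst s. \<not> v p)"

lemma Cv_inv: "derivable (Cv v) s \<Longrightarrow> Inv v s"
proof (induct rule: derivable.induct)
  case (axiom_weak G D Th Sg)
  then show ?case unfolding Cv_def HS_def Inv_def by auto
next
  case (mix ps G D Ths Sgs)
  show ?case
  proof (cases "ps = []")
    case True
    then show ?thesis using mix unfolding Cv_def HS_def Inv_def by auto
  next
    case False
    then obtain q where q: "ps = [({}, {q}), ({q}, {})]" "G = {}" "D = {}"
      using mix(1) unfolding Cv_def HS_def by auto
    obtain T1 T2 where T: "Ths = [T1, T2]" using mix(2) q(1)
      by (cases Ths; cases "tl Ths"; auto)
    obtain S1 S2 where S: "Sgs = [S1, S2]" using mix(3) q(1)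
      by (cases Sgs; cases "tl Sgs"; auto)
    have i0: "Inv v (T1, {q} \<union> S1)" using mix(4) q T S by (auto dest: spec[of _ 0])
    have i1: "Inv v (T2 \<union> {q}, S2)" using mix(4) q T S by (auto dest: spec[of _ 1])
    show ?thesis using i0 i1 q T S unfolding Inv_def by (cases "v q") auto
  qed
qed

lemma Cv_cons: "\<not> inc (Cv v)"
proof
  assume "inc (Cv v)"
  then have "derivable (Cv v) ({}, {})" unfolding inc_def by auto
  then show False using Cv_inv[of v "({}, {})"] unfolding Inv_def by auto
qed



lemma Un_set_upd0: "xs \<noteq> [] \<Longrightarrow> \<Union> (set (xs[0 := xs ! 0 \<union> S])) = \<Union> (set xs) \<union> S"
  by (cases xs) auto

lemma der_weakR:
  assumes "derivable B s" "finite Sg" shows "derivable B (fst s, snd s \<union> Sg)"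
  using assms(1)
proof induct
  case (axiom_weak G D Th Sg')
  then show ?case using assms(2)
    using derivable.axiom_weak[of G D B Th "Sg' \<union> Sg"] by (simp add: Un_assoc)
next
  case (mix ps G D Ths Sgs)
  show ?case
  proof (cases "ps = []")
    case True
    then have "Ths = []" "Sgs = []" using mix(2,3) by auto
    then show ?thesis using True mix(1) assms(2)
      using derivable.axiom_weak[of G D B "{}" Sg] by simp
  next
    case False
    define Sgs' where "Sgs' = Sgs[0 := Sgs ! 0 \<union> Sg]"
    have ne: "Sgs \<noteq> []" using False mix(3) by auto
    have l: "length Sgs' = length ps" using mix(3) Sgs'_def by simp
    have all: "\<forall>i<length ps. finite (Ths ! i) \<and> finite (Sgs' ! i) \<and>
        derivable B (Ths ! i \<union> fst (ps ! i), snd (ps ! i) \<union> Sgs' ! i)"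
    proof (intro allI impI)
      fix i assume i: "i < length ps"
      show "finite (Ths ! i) \<and> finite (Sgs' ! i) \<and>
        derivable B (Ths ! i \<union> fst (ps ! i), snd (ps ! i) \<union> Sgs' ! i)"
      proof (cases "i = 0")
        case True
        then show ?thesis using mix(4) i assms(2) ne unfolding Sgs'_def
          by (auto simp: Un_assoc)
      next
        case False
        then show ?thesis using mix(4) i unfolding Sgs'_def by auto
      qed
    qed
    have "derivable B (\<Union> (set Ths) \<union> G, D \<union> \<Union> (set Sgs'))"
      by (rule derivable.mix[OF mix(1) mix(2) l all])
    then show ?thesis unfolding Sgs'_def using Un_set_upd0[OF ne, of Sg] by (simp add: Un_assoc)
  qed
qed



lemma sf_unfold: "finite G \<Longrightarrow> \<not>(\<forall>A\<in>G. is_atom A) \<Longrightarrow> supp_fuel (Suc n) B G =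
   (case pick G of
          Bot \<Rightarrow> supp_fuel n B (G - {pick G})
        | Conj X Y \<Rightarrow> supp_fuel n B (insert X (G - {pick G})) \<and> supp_fuel n B (insert Y (G - {pick G}))
        | Disj X Y \<Rightarrow> supp_fuel n B (insert X (insert Y (G - {pick G})))
        | Imp X Y \<Rightarrow>
            (\<forall>C Th. base C \<longrightarrow> B \<subseteq> C \<longrightarrow> finite Th \<longrightarrow>
               supp_fuel n C (Atom ` Th \<union> {X}) \<longrightarrow> supp_fuel n C (Atom ` Th \<union> insert Y (G - {pick G})))
        | Atom p \<Rightarrow> False)"
  by (simp only: supp_fuel.simps(2) if_True if_False not_True_eq_False not_False_eq_True Let_def)

lemma sf_atoms: "finite G \<Longrightarrow> (\<forall>A\<in>G. is_atom A) \<Longrightarrow> supp_fuel (Suc n) B G =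
   derivable B ({}, {p. Atom p \<in> G})"
  by simp

lemma TL:
  "cwt G < n \<Longrightarrow> finite G \<Longrightarrow> base C \<Longrightarrow> Cv v \<subseteq> C \<Longrightarrow>
   supp_fuel n C G \<longleftrightarrow> (inc C \<or> (\<exists>A\<in>G. ev v A))"
proof (induction n arbitrary: G C)
  case 0 then show ?case by simp
next
  case (Suc n)
  note fin = Suc.prems(2) and bC = Suc.prems(3) and sub = Suc.prems(4)
  show ?case
  proof (cases "\<forall>A\<in>G. is_atom A")
    case True
    define S where "S = {p. Atom p \<in> G}"
    have finS: "finite S"
    proof -
      have "S = Atom -` G" unfolding S_def by auto
      then show ?thesis using finite_vimageI[OF fin, of Atom] by (simp add: inj_def)
    qed
    have ex: "(\<exists>A\<in>G. ev v A) \<longleftrightarrow> (\<exists>p\<in>S. v p)"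
    proof
      assume "\<exists>A\<in>G. ev v A"
      then obtain A where A: "A \<in> G" "ev v A" by blast
      then obtain p where "A = Atom p" using True is_atomE by blast
      then show "\<exists>p\<in>S. v p" using A S_def by auto
    next
      assume "\<exists>p\<in>S. v p"
      then show "\<exists>A\<in>G. ev v A" unfolding S_def by force
    qed
    have "derivable C ({}, S) \<longleftrightarrow> inc C \<or> (\<exists>p\<in>S. v p)"
    proof
      assume d: "derivable C ({}, S)"
      show "inc C \<or> (\<exists>p\<in>S. v p)"
      proof (rule ccontr)
        assume "\<not> (inc C \<or> (\<exists>p\<in>S. v p))"
        then have nf: "\<forall>p\<in>S. \<not> v p" and ni: "\<not> inc C" by auto
        have d0: "derivable C ({}, {})" using cut_lemma[OF finS nf sub, of "{}"] d by simp
        have "inc C" unfolding inc_def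
        proof (intro allI impI)
          fix S' :: "nat set" assume "finite S'"
          from der_weakR[OF d0 this] show "derivable C ({}, S')" by simp
        qed
        then show False using ni by simp
      qed
    next
      assume "inc C \<or> (\<exists>p\<in>S. v p)"
      then show "derivable C ({}, S)"
      proof
        assume "inc C" then show ?thesis using finS unfolding inc_def by auto
      next
        assume "\<exists>p\<in>S. v p"
        then obtain p where p: "p \<in> S" "v p" by blast
        have "([], ({}, {p})) \<in> C" using p sub unfolding Cv_def by auto
        from derivable.axiom_weak[OF this, of "{}" S] finS p show ?thesis
          by (simp add: insert_absorb)
      qed
    qed
    then show ?thesis using sf_atoms[OF fin True] ex S_def by simp
  next
    case False
    define A where "A = pick G"
    have A: "A \<in> G" "\<not> is_atom A" using pick_in False A_def by auto
    define R where "R = G - {A}"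
    have GR: "G = insert A R" using A R_def by blast
    have finR: "finite R" using fin R_def by simp
    have cw: "cwt G = wt A + cwt R" using cwt_remove[OF fin A(1)] R_def by simp
    have lt: "cwt G \<le> n" using Suc.prems(1) by simp
    have unf: "supp_fuel (Suc n) C G = (case A of
          Bot \<Rightarrow> supp_fuel n C R
        | Conj X Y \<Rightarrow> supp_fuel n C (insert X R) \<and> supp_fuel n C (insert Y R)
        | Disj X Y \<Rightarrow> supp_fuel n C (insert X (insert Y R))
        | Imp X Y \<Rightarrow>
            (\<forall>C' Th. base C' \<longrightarrow> C \<subseteq> C' \<longrightarrow> finite Th \<longrightarrow>
               supp_fuel n C' (Atom ` Th \<union> {X}) \<longrightarrow> supp_fuel n C' (Atom ` Th \<union> insert Y R))
        | Atom p \<Rightarrow> False)"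
      unfolding R_def A_def by (rule sf_unfold[OF fin False])
    show ?thesis
    proof (cases A)
      case (Atom p) then show ?thesis using A by simp
    next
      case Bot
      have "supp_fuel n C R \<longleftrightarrow> (inc C \<or> (\<exists>A\<in>R. ev v A))"
        using Suc.IH[OF _ finR bC sub] cw lt Bot by simp
      then show ?thesis using unf Bot GR by auto
    next
      case (Conj X Y)
      have c1: "cwt (insert X R) < n" and c2: "cwt (insert Y R) < n"
        using cw lt Conj cwt_insert_le[of R Y] cwt_insert_le[of R X] finR by simp_all
      have "supp_fuel n C (insert X R) \<longleftrightarrow> (inc C \<or> (\<exists>A\<in>insert X R. ev v A))"
        using Suc.IH[OF c1 _ bC sub] finR by simp
      moreover have "supp_fuel n C (insert Y R) \<longleftrightarrow> (inc C \<or> (\<exists>A\<in>insert Y R. ev v A))"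
        using Suc.IH[OF c2 _ bC sub] finR by simp
      ultimately show ?thesis using unf Conj GR by auto
    next
      case (Disj X Y)
      have c: "cwt (insert X (insert Y R)) < n"
        using cw lt Disj cwt_insert_le[of R Y] cwt_insert_le[of "insert Y R" X] finR by simp
      have "supp_fuel n C (insert X (insert Y R)) \<longleftrightarrow> (inc C \<or> (\<exists>A\<in>insert X (insert Y R). ev v A))"
        using Suc.IH[OF c _ bC sub] finR by simp
      then show ?thesis using unf Disj GR by auto
    next
      case (Imp X Y)
      have c1: "cwt (Atom ` Th \<union> {X}) < n" if "finite Th" for Th
        using cw lt Imp cwt_atoms[OF that, of "{X}"] by (simp add: cwt_def)
      have c2: "cwt (Atom ` Th \<union> insert Y R) < n" if "finite Th" for Th
        using cw lt Imp cwt_atoms[OF that, of "insert Y R"] cwt_insert_le[of R Y] finR by simp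
      have IH1: "supp_fuel n C' (Atom ` Th \<union> {X}) \<longleftrightarrow> (inc C' \<or> (\<exists>A\<in>Atom ` Th \<union> {X}. ev v A))"
        if "finite Th" "base C'" "C \<subseteq> C'" for Th C'
        using Suc.IH[OF c1[OF that(1)] _ that(2)] that sub by auto
      have IH2: "supp_fuel n C' (Atom ` Th \<union> insert Y R) \<longleftrightarrow> (inc C' \<or> (\<exists>A\<in>Atom ` Th \<union> insert Y R. ev v A))"
        if "finite Th" "base C'" "C \<subseteq> C'" for Th C'
        using Suc.IH[OF c2[OF that(1)] _ that(2)] that sub finR by auto
      show ?thesis
      proof
        assume s: "supp_fuel (Suc n) C G"
        then have s': "\<forall>C' Th. base C' \<longrightarrow> C \<subseteq> C' \<longrightarrow> finite Th \<longrightarrow>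
               supp_fuel n C' (Atom ` Th \<union> {X}) \<longrightarrow> supp_fuel n C' (Atom ` Th \<union> insert Y R)"
          using unf Imp by simp
        show "inc C \<or> (\<exists>A\<in>G. ev v A)"
        proof (cases "ev v X")
          case True
          have "supp_fuel n C (Atom ` {} \<union> {X})" using IH1[of "{}" C] bC True by simp
          then have "supp_fuel n C (Atom ` {} \<union> insert Y R)" using s' bC by blast
          then have "inc C \<or> (\<exists>A\<in>insert Y R. ev v A)" using IH2[of "{}" C] bC by simp
          then show ?thesis using GR Imp by auto
        next
          case False
          then show ?thesis using GR Imp by auto
        qed
      next
        assume h: "inc C \<or> (\<exists>A\<in>G. ev v A)"
        have "supp_fuel n C' (Atom ` Th \<union> insert Y R)"
          if "base C'" "C \<subseteq> C'" "finite Th" "supp_fuel n C' (Atom ` Th \<union> {X})" for C' Th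
        proof -
          have a: "inc C' \<or> (\<exists>A\<in>Atom ` Th \<union> {X}. ev v A)" using IH1[of Th C'] that by simp
          have "inc C' \<or> (\<exists>A\<in>Atom ` Th \<union> insert Y R. ev v A)"
            using a h inc_mono[OF _ that(2)] GR Imp by (auto simp: image_iff, force)
          then show ?thesis using IH2[of Th C'] that by simp
        qed
        then show "supp_fuel (Suc n) C G" using unf Imp by simp
      qed
    qed
  qed
qed

lemma TL_supp: "finite G \<Longrightarrow> supp (Cv v) G \<longleftrightarrow> (\<exists>A\<in>G. ev v A)"
  unfolding supp_def using TL[of G "Suc (cwt G)" "Cv v" v] base_Cv Cv_cons by auto

theorem theorem4:
  fixes G D :: "form set"
  assumes "finite G" and "finite D" and "cf_valid G D"
  shows "CLp G D"
proof (rule classical_complete[OF assms(1,2)], intro allI impI)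
  fix v assume tG: "\<forall>A\<in>G. ev v A"
  have inf: "infer (Cv v) G D" using assms(3) base_Cv HS_Cv unfolding cf_valid_def by blast
  have sD: "supp (Cv v) D \<Longrightarrow> \<exists>B\<in>D. ev v B" using TL_supp[OF assms(2)] by blast
  show "\<exists>B\<in>D. ev v B"
  proof (cases "G = {}")
    case True
    then have "supp (Cv v) D" using inf unfolding infer_def by simp
    then show ?thesis by (rule sD)
  next
    case False
    have pr: "\<forall>A\<in>G. finite ((\<lambda>_. {}) A) \<and> supp (Cv v) (Atom ` ((\<lambda>_. ({}::nat set)) A) \<union> {A})"
    proof
      fix A assume "A \<in> G"
      then have "ev v A" using tG by blast
      then have "supp (Cv v) {A}" using TL_supp[of "{A}" v] by simp
      then show "finite ((\<lambda>_. {}) A) \<and> supp (Cv v) (Atom ` ((\<lambda>_. ({}::nat set)) A) \<union> {A})" by simp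
    qed
    have al: "\<forall>C Th. base C \<longrightarrow> Cv v \<subseteq> C \<longrightarrow>
             (\<forall>A\<in>G. finite (Th A) \<and> supp C (Atom ` Th A \<union> {A})) \<longrightarrow>
             supp C (Atom ` (\<Union>A\<in>G. Th A) \<union> D)"
      using inf False unfolding infer_def by presburger
    have "supp (Cv v) (Atom ` (\<Union>A\<in>G. (\<lambda>_. ({}::nat set)) A) \<union> D)"
      using al[THEN spec, THEN spec, of "Cv v" "\<lambda>_. {}"] base_Cv[of v] pr by blast
    then have "supp (Cv v) D" by simp
    then show ?thesis by (rule sD)
  qed
qed

end
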